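(* Assume the standing conventions of the context and suppose $\mathcal D_{Z,Z'}\neq\emptyset$. (i) If $\Lambda\in\overline{\mathcal S}_Z$ and $\Lambda'_0\in B^+_\Lambda$, then $B^+_\Lambda=\{\Lambda'_0+\Lambda'\mid \Lambda'\in D_Z\}$. (ii) If $\Lambda'\in\overline{\mathcal S}_{Z'}$ and $\Lambda_0\in B^+_{\Lambda'}$, then $B^+_{\Lambda'}=\{\Lambda_0+\Lambda\mid\Lambda\in D_{Z'}\}$.
   Context: A symbol is an array $\Lambda=\binom{a'_1,\ldots,a'_{m_1}}{b'_1,\ldots,b'_{m_2}}$ of two strictly decreasing finite sequences of nonnegative integers (top row, bottom row); its defect is $\mathrm{def}(\Lambda)=m_1-m_2$. Standing assumptions: $Z=\binom{a_1,\ldots,a_{m+1}}{b_1,\ldots,b_m}$ is a special symbol of defect $1$, i.e. $a_1\ge b_1\ge a_2\ge b_2\ge\cdots\ge b_m\ge a_{m+1}$; $Z'=\binom{c_1,\ldots,c_{m'}}{d_1,\ldots,d_{m'}}$ is a special symbol of defect $0$, i.e. $c_1\ge d_1\ge c_2\ge d_2\ge\cdots\ge c_{m'}\ge d_{m'}$; and $m'\in\{m,m+1\}$. For a symbol $Y$, $Y_{\mathrm I}$ is the set of entries of $Y$ occurring in exactly one row. For $M\subset Z_{\mathrm I}$, $\Lambda_M$ is the symbol obtained from $Z$ by moving every entry of $M$ to the other row (rows re-sorted decreasingly); for $N\subset Z'_{\mathrm I}$, $\Lambda_N$ is obtained from $Z'$ in the same way. $\overline{\mathcal S}_Z=\{\Lambda_M: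 M\subset Z_{\mathrm I}\}$, $\overline{\mathcal S}_{Z'}=\{\Lambda_N:N\subset Z'_{\mathrm I}\}$; $\mathcal S_{Z,1}$ (resp. $\mathcal S_{Z',0}$) is the set of elements of $\overline{\mathcal S}_Z$ of defect $1$ (resp. of $\overline{\mathcal S}_{Z'}$ of defect $0$). Sum: $\Lambda_{M_1}+\Lambda_{M_2}:=\Lambda_{(M_1\cup M_2)\smallsetminus(M_1\cap M_2)}$ (for subsets of $Z_{\mathrm I}$, and likewise of $Z'_{\mathrm I}$). Relation $\overline{\mathcal B}^+_{Z,Z'}\subset\overline{\mathcal S}_Z\times\overline{\mathcal S}_{Z'}$: for $\Lambda=\binom{a'_1,\ldots,a'_{m_1}}{b'_1,\ldots,b'_{m_2}}\in\overline{\mathcal S}_Z$ and $\Lambda'=\binom{c'_1,\ldots,c'_{m'_1}}{d'_1,\ldots,d'_{m'_2}}\in\overline{\mathcal S}_{Z'}$, $(\Lambda,\Lambda')\in\overline{\mathcal B}^+_{Z,Z'}$ iff $\mathrm{def}(\Lambda')=1-\mathrm{def}(\Lambda)$ and: if $m'=m$, $a'_i>d'_i\ge a'_{i+1}$ for $1\le i\le m'_2$ and $b'_{i-1}>c'_i\ge b'_i$ for $1\le i\le m'_1$; if $m'=m+1$, $a'_i\ge d'_i>a'_{i+1}$ for $1\le i\le m'_2$ and $b'_{i-1}\ge c'_i>b'_i$ for $1\le i\le m'_1$; here $b'_0=+\infty$ and nonexistent entries $a'_j,b'_j$ beyond the row lengths are $-\infty$. Then $\mathcal D_{Z,Z'}=\overline{\mathcal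 B}^+_{Z,Z'}\cap(\mathcal S_{Z,1}\times\mathcal S_{Z',0})$, $D_Z=\{\Lambda'\mid (Z,\Lambda')\in\mathcal D_{Z,Z'}\}$, $D_{Z'}=\{\Lambda\mid(\Lambda,Z')\in\mathcal D_{Z,Z'}\}$, and for $\Lambda\in\overline{\mathcal S}_Z$, $\Lambda'\in\overline{\mathcal S}_{Z'}$: $B^+_\Lambda=\{\Lambda''\in\overline{\mathcal S}_{Z'}\mid(\Lambda,\Lambda'')\in\overline{\mathcal B}^+_{Z,Z'}\}$ and $B^+_{\Lambda'}=\{\Lambda''\in\overline{\mathcal S}_{Z}\mid(\Lambda'',\Lambda')\in\overline{\mathcal B}^+_{Z,Z'}\}$. *)

theory Defs
  imports Main "HOL-Library.Extended_Real"
begin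

text \<open>A symbol is a pair (top row, bottom row) of finite sets of natural numbers;
  each row is read as its strictly decreasing enumeration.\<close>
type_synonym symbol = "nat set \<times> nat set"

text \<open>The i-th largest entry (1-indexed) of a row; nonexistent entries are minus infinity.\<close>
definition entry :: "nat set \<Rightarrow> nat \<Rightarrow> ereal" where
  "entry S i = (if 1 \<le> i \<and> i \<le> card S
                then ereal (real (rev (sorted_list_of_set S) ! (i - 1))) else -\<infinity>)"

definition bentry :: "nat set \<Rightarrow> nat \<Rightarrow> ereal" where
  "bentry S i = (if i = 0 then \<infinity> else entry S i)"

definition defect :: "symbol \<Rightarrow> int" where
  "defect L = int (card (fst L)) - int (card (snd L))"

definition singles :: "symbol \<Rightarrow> nat set" where
  "singles L = (fst L - snd L) \<union> (snd L - fst L)"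

definition move :: "symbol \<Rightarrow> nat set \<Rightarrow> symbol" where
  "move L M = ((fst L - M) \<union> (snd L \<inter> M), (snd L - M) \<union> (fst L \<inter> M))"

definition Sbar :: "symbol \<Rightarrow> symbol set" where
  "Sbar L = {move L M | M. M \<subseteq> singles L}"

definition Sdef :: "symbol \<Rightarrow> int \<Rightarrow> symbol set" where
  "Sdef L k = {X \<in> Sbar L. defect X = k}"

text \<open>The set M with X = move Z M (valid for X in Sbar Z).\<close>
definition moved_set :: "symbol \<Rightarrow> symbol \<Rightarrow> nat set" where
  "moved_set Z X = (fst Z - fst X) \<union> (snd Z - snd X)"

definition sym_sum :: "symbol \<Rightarrow> symbol \<Rightarrow> symbol \<Rightarrow> symbol" where
  "sym_sum Z X Y = move Z ((moved_set Z X \<union> moved_set Z Y) - (moved_set Z X \<inter> moved_set Z Y))"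

definition special1 :: "symbol \<Rightarrow> bool" where
  "special1 Z \<longleftrightarrow> finite (fst Z) \<and> finite (snd Z) \<and> card (fst Z) = card (snd Z) + 1 \<and>
     (\<forall>i. 1 \<le> i \<and> i \<le> card (snd Z) \<longrightarrow>
        entry (snd Z) i \<le> entry (fst Z) i \<and> entry (fst Z) (i + 1) \<le> entry (snd Z) i)"

definition special0 :: "symbol \<Rightarrow> bool" where
  "special0 Z \<longleftrightarrow> finite (fst Z) \<and> finite (snd Z) \<and> card (fst Z) = card (snd Z) \<and>
     (\<forall>i. 1 \<le> i \<and> i \<le> card (snd Z) \<longrightarrow>
        entry (snd Z) i \<le> entry (fst Z) i \<and>
        (i < card (snd Z) \<longrightarrow> entry (fst Z) (i + 1) \<le> entry (snd Z) i))"

definition Bcond :: "nat \<Rightarrow> nat \<Rightarrow> symbol \<Rightarrow> symbol \<Rightarrow> bool" where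
  "Bcond m m' L L' \<longleftrightarrow> defect L' = 1 - defect L \<and>
    (if m' = m then
       (\<forall>i. 1 \<le> i \<and> i \<le> card (snd L') \<longrightarrow>
          entry (snd L') i < entry (fst L) i \<and> entry (fst L) (i + 1) \<le> entry (snd L') i) \<and>
       (\<forall>i. 1 \<le> i \<and> i \<le> card (fst L') \<longrightarrow>
          entry (fst L') i < bentry (snd L) (i - 1) \<and> entry (snd L) i \<le> entry (fst L') i)
     else
       (\<forall>i. 1 \<le> i \<and> i \<le> card (snd L') \<longrightarrow>
          entry (snd L') i \<le> entry (fst L) i \<and> entry (fst L) (i + 1) < entry (snd L') i) \<and>
       (\<forall>i. 1 \<le> i \<and> i \<le> card (fst L') \<longrightarrow>
          entry (fst L') i \<le> bentry (snd L) (i - 1) \<and> entry (snd L) i < entry (fst L') i))"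

definition Bbar :: "symbol \<Rightarrow> symbol \<Rightarrow> (symbol \<times> symbol) set" where
  "Bbar Z Z' = {(L, L'). L \<in> Sbar Z \<and> L' \<in> Sbar Z' \<and> Bcond (card (snd Z)) (card (snd Z')) L L'}"

definition Dset :: "symbol \<Rightarrow> symbol \<Rightarrow> (symbol \<times> symbol) set" where
  "Dset Z Z' = Bbar Z Z' \<inter> (Sdef Z 1 \<times> Sdef Z' 0)"

definition D_Z :: "symbol \<Rightarrow> symbol \<Rightarrow> symbol set" where
  "D_Z Z Z' = {L'. (Z, L') \<in> Dset Z Z'}"

definition D_Z' :: "symbol \<Rightarrow> symbol \<Rightarrow> symbol set" where
  "D_Z' Z Z' = {L. (L, Z') \<in> Dset Z Z'}"

definition Bplus_left :: "symbol \<Rightarrow> symbol \<Rightarrow> symbol \<Rightarrow> symbol set" where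
  "Bplus_left Z Z' L = {L''. (L, L'') \<in> Bbar Z Z'}"

definition Bplus_right :: "symbol \<Rightarrow> symbol \<Rightarrow> symbol \<Rightarrow> symbol set" where
  "Bplus_right Z Z' L' = {L''. (L'', L') \<in> Bbar Z Z'}"

end

theory Submission
  imports Defs
begin


definition cnt :: "nat set \<Rightarrow> nat \<Rightarrow> nat" where
  "cnt S x = card {s\<in>S. x \<le> s}"

lemma cnt_le_card: "finite S \<Longrightarrow> cnt S x \<le> card S"
  unfolding cnt_def by (intro card_mono) auto

lemma cnt_0: "cnt S 0 = card S"
  unfolding cnt_def by simp

lemma cnt_mono: "finite S \<Longrightarrow> x \<le> y \<Longrightarrow> cnt S y \<le> cnt S x"
  unfolding cnt_def by (intro card_mono) auto

lemma cnt_Suc: "finite S \<Longrightarrow> cnt S x = cnt S (Suc x) + (if x \<in> S then 1 else 0)"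
proof -
  assume f: "finite S"
  have e: "{s\<in>S. x \<le> s} = {s\<in>S. Suc x \<le> s} \<union> (if x \<in> S then {x} else {})"
    by (auto simp: Suc_le_eq order_le_less)
  show ?thesis unfolding cnt_def e using f by (auto simp: card_insert_if)
qed

lemma entry_ge_iff:
  assumes f: "finite S" and i: "1 \<le> i"
  shows "ereal (real x) \<le> entry S i \<longleftrightarrow> i \<le> cnt S x"
proof (cases "i \<le> card S")
  case False
  then show ?thesis using cnt_le_card[OF f, of x] by (auto simp: entry_def)
next
  case True
  define l where "l = rev (sorted_list_of_set S)"
  have len: "length l = card S" by (simp add: l_def)
  have sl: "set l = S" using f by (simp add: l_def)
  have dl: "distinct l" by (simp add: l_def)
  have so: "sorted_wrt (>) l" unfolding l_def sorted_wrt_rev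
    using strict_sorted_list_of_set[of S] by simp
  have ent: "entry S i = ereal (real (l ! (i - 1)))" using True i by (simp add: entry_def l_def)
  have lt: "\<And>j k. j < k \<Longrightarrow> k < length l \<Longrightarrow> l ! k < l ! j"
    using so by (simp add: sorted_wrt_iff_nth_less)
  have injl: "inj_on (\<lambda>j. l ! j) {..<length l}"
    using dl by (auto simp: inj_on_def nth_eq_iff_index_eq)
  show ?thesis
  proof
    assume "ereal (real x) \<le> entry S i"
    hence xl: "x \<le> l ! (i - 1)" using ent by simp
    have sub: "(\<lambda>j. l ! j) ` {..<i} \<subseteq> {s\<in>S. x \<le> s}"
    proof
      fix s assume "s \<in> (\<lambda>j. l ! j) ` {..<i}"
      then obtain j where j: "j < i" "s = l ! j" by auto
      have "l ! (i - 1) \<le> l ! j"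
        proof (cases "j = i - 1")
        case False
        hence "j < i - 1" using j by linarith
        moreover have "i - 1 < length l" using True i len by linarith
        ultimately show ?thesis using lt[of j "i - 1"] by (meson less_imp_le)
      qed simp
      have "j < length l" using j True len by linarith
      hence "s \<in> S" using sl j nth_mem by blast
      moreover have "x \<le> s" using xl \<open>l ! (i - 1) \<le> l ! j\<close> j by linarith
      ultimately show "s \<in> {s\<in>S. x \<le> s}" by simp
    qed
    have "{..<i} \<subseteq> {..<length l}" using True len by auto
    hence "card ((\<lambda>j. l ! j) ` {..<i}) = i"
      using card_image[OF inj_on_subset[OF injl]] by simp
    moreover have "finite {s\<in>S. x \<le> s}" using f by simp
    ultimately show "i \<le> cnt S x" unfolding cnt_def
      using card_mono[OF _ sub] by metis
  next
    assume c: "i \<le> cnt S x"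
    show "ereal (real x) \<le> entry S i"
    proof (rule ccontr)
      assume "\<not> ?thesis"
      hence xl: "l ! (i - 1) < x" using ent by simp
      have sub: "{s\<in>S. x \<le> s} \<subseteq> (\<lambda>j. l ! j) ` {..<i - 1}"
      proof
        fix s assume s: "s \<in> {s\<in>S. x \<le> s}"
        then obtain j where j: "j < length l" "s = l ! j" using sl by (auto simp: in_set_conv_nth)
        have "j < i - 1"
        proof (rule ccontr)
          assume "\<not> j < i - 1"
          hence "l ! j \<le> l ! (i - 1)"
          proof (cases "j = i - 1")
            case False
            hence "i - 1 < j" using \<open>\<not> j < i - 1\<close> by linarith
            thus ?thesis using lt[of "i - 1" j] j by (meson less_imp_le)
          qed simp
          thus False using xl s j by auto
        qed
        thus "s \<in> (\<lambda>j. l ! j) ` {..<i - 1}" using j by auto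
      qed
      have "card {s\<in>S. x \<le> s} \<le> card ((\<lambda>j. l ! j) ` {..<i - 1})"
        using card_mono[OF _ sub] by blast
      also have "\<dots> \<le> i - 1" using card_image_le[of "{..<i - 1}" "\<lambda>j. l ! j"] by simp
      finally have "cnt S x \<le> i - 1" unfolding cnt_def .
      thus False using c i by simp
    qed
  qed
qed

definition ev :: "nat set \<Rightarrow> nat \<Rightarrow> nat" where
  "ev S i = rev (sorted_list_of_set S) ! (i - 1)"

lemma entry_in: "1 \<le> i \<Longrightarrow> i \<le> card S \<Longrightarrow> entry S i = ereal (real (ev S i))"
  by (simp add: entry_def ev_def)

lemma entry_out: "\<not> (1 \<le> i \<and> i \<le> card S) \<Longrightarrow> entry S i = -\<infinity>"
  by (simp add: entry_def)

lemma le_via_cnt: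
  assumes "finite X" "finite Y" "1 \<le> i" "1 \<le> j"
  shows "entry X i \<le> entry Y j \<longleftrightarrow> (\<forall>x. i \<le> cnt X x \<longrightarrow> j \<le> cnt Y x)"
proof
  assume h: "entry X i \<le> entry Y j"
  show "\<forall>x. i \<le> cnt X x \<longrightarrow> j \<le> cnt Y x"
    using h entry_ge_iff[OF assms(1,3)] entry_ge_iff[OF assms(2,4)] order_trans by blast
next
  assume h: "\<forall>x. i \<le> cnt X x \<longrightarrow> j \<le> cnt Y x"
  show "entry X i \<le> entry Y j"
  proof (cases "i \<le> card X")
    case True
    have "i \<le> cnt X (ev X i)" using entry_ge_iff[OF assms(1,3), of "ev X i"] entry_in[OF assms(3) True] by simp
    hence "j \<le> cnt Y (ev X i)" using h by blast
    thus ?thesis using entry_ge_iff[OF assms(2,4)] entry_in[OF assms(3) True] by simp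
  next
    case False
    thus ?thesis using entry_out[of i X] by simp
  qed
qed

lemma entry_nat_or_minf: "entry S i = -\<infinity> \<or> (\<exists>n::nat. entry S i = ereal (real n))"
  by (simp add: entry_def)

lemma less_via_cnt:
  assumes "finite X" "finite Y" "1 \<le> i" "i \<le> card X" "1 \<le> j"
  shows "entry X i < entry Y j \<longleftrightarrow> (\<forall>x. i \<le> cnt X x \<longrightarrow> j \<le> cnt Y (Suc x))"
proof
  assume h: "entry X i < entry Y j"
  show "\<forall>x. i \<le> cnt X x \<longrightarrow> j \<le> cnt Y (Suc x)"
  proof (intro allI impI)
    fix x assume "i \<le> cnt X x"
    hence xle: "x \<le> ev X i" using entry_ge_iff[OF assms(1,3)] entry_in[OF assms(3,4)] by simp
    from entry_nat_or_minf[of Y j] h obtain z :: nat where z: "entry Y j = ereal (real z)"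
      by auto
    have "ev X i < z" using h z entry_in[OF assms(3,4)] by simp
    hence "ereal (real (Suc x)) \<le> entry Y j" using z xle by simp
    thus "j \<le> cnt Y (Suc x)" using entry_ge_iff[OF assms(2,5)] by blast
  qed
next
  assume h: "\<forall>x. i \<le> cnt X x \<longrightarrow> j \<le> cnt Y (Suc x)"
  have "i \<le> cnt X (ev X i)" using entry_ge_iff[OF assms(1,3), of "ev X i"] entry_in[OF assms(3,4)] by simp
  hence "j \<le> cnt Y (Suc (ev X i))" using h by blast
  hence "ereal (real (Suc (ev X i))) \<le> entry Y j" using entry_ge_iff[OF assms(2,5)] by blast
  moreover have "ereal (real (ev X i)) < ereal (real (Suc (ev X i)))" by simp
  ultimately show "entry X i < entry Y j" using entry_in[OF assms(3,4)]
    by (metis less_le_trans)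
qed


lemma GLa:
  assumes "finite S" "finite T"
  shows "(\<forall>i. 1 \<le> i \<and> i \<le> card S \<longrightarrow> entry S i \<le> entry T i) \<longleftrightarrow> (\<forall>x. cnt S x \<le> cnt T x)"
proof
  assume h: "\<forall>i. 1 \<le> i \<and> i \<le> card S \<longrightarrow> entry S i \<le> entry T i"
  show "\<forall>x. cnt S x \<le> cnt T x"
  proof
    fix x
    show "cnt S x \<le> cnt T x"
    proof (cases "cnt S x = 0")
      case False
      hence "entry S (cnt S x) \<le> entry T (cnt S x)" using h cnt_le_card[OF assms(1), of x] by simp
      thus ?thesis using le_via_cnt[OF assms, of "cnt S x" "cnt S x"] False by simp
    qed simp
  qed
next
  assume h: "\<forall>x. cnt S x \<le> cnt T x"
  show "\<forall>i. 1 \<le> i \<and> i \<le> card S \<longrightarrow> entry S i \<le> entry T i"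
    using le_via_cnt[OF assms] h order_trans by blast
qed

lemma GLb:
  assumes "finite S" "finite T" "card T \<le> card S"
  shows "(\<forall>i. 1 \<le> i \<and> i \<le> card S \<longrightarrow> entry T i \<le> entry S i) \<longleftrightarrow> (\<forall>x. cnt T x \<le> cnt S x)"
proof
  assume h: "\<forall>i. 1 \<le> i \<and> i \<le> card S \<longrightarrow> entry T i \<le> entry S i"
  show "\<forall>x. cnt T x \<le> cnt S x"
  proof
    fix x
    show "cnt T x \<le> cnt S x"
    proof (cases "cnt T x = 0")
      case False
      hence "entry T (cnt T x) \<le> entry S (cnt T x)" using h cnt_le_card[OF assms(2), of x] assms(3) by simp
      thus ?thesis using le_via_cnt[OF assms(2,1), of "cnt T x" "cnt T x"] False by simp
    qed simp
  qed
next
  assume h: "\<forall>x. cnt T x \<le> cnt S x"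
  show "\<forall>i. 1 \<le> i \<and> i \<le> card S \<longrightarrow> entry T i \<le> entry S i"
    using le_via_cnt[OF assms(2,1)] h order_trans by blast
qed

lemma GLc:
  assumes "finite S" "finite T"
  shows "(\<forall>i. 1 \<le> i \<and> i \<le> card S \<longrightarrow> entry S i < entry T i) \<longleftrightarrow> (\<forall>x. cnt S x \<le> cnt T (Suc x))"
proof
  assume h: "\<forall>i. 1 \<le> i \<and> i \<le> card S \<longrightarrow> entry S i < entry T i"
  show "\<forall>x. cnt S x \<le> cnt T (Suc x)"
  proof
    fix x
    show "cnt S x \<le> cnt T (Suc x)"
    proof (cases "cnt S x = 0")
      case False
      have c: "cnt S x \<le> card S" using cnt_le_card[OF assms(1)] .
      hence "entry S (cnt S x) < entry T (cnt S x)" using h False by simp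
      thus ?thesis using less_via_cnt[OF assms, of "cnt S x" "cnt S x"] False c by simp
    qed simp
  qed
next
  assume h: "\<forall>x. cnt S x \<le> cnt T (Suc x)"
  show "\<forall>i. 1 \<le> i \<and> i \<le> card S \<longrightarrow> entry S i < entry T i"
  proof (intro allI impI)
    fix i assume i: "1 \<le> i \<and> i \<le> card S"
    have "\<forall>x. i \<le> cnt S x \<longrightarrow> i \<le> cnt T (Suc x)" using h le_trans by blast
    thus "entry S i < entry T i" using less_via_cnt[OF assms, of i i] i by simp
  qed
qed

lemma GLd:
  assumes "finite S" "finite T" "card T < card S"
  shows "(\<forall>i. 1 \<le> i \<and> i \<le> card S \<longrightarrow> entry T i < entry S i) \<longleftrightarrow> (\<forall>x. cnt T x \<le> cnt S (Suc x))"
proof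
  assume h: "\<forall>i. 1 \<le> i \<and> i \<le> card S \<longrightarrow> entry T i < entry S i"
  show "\<forall>x. cnt T x \<le> cnt S (Suc x)"
  proof
    fix x
    show "cnt T x \<le> cnt S (Suc x)"
    proof (cases "cnt T x = 0")
      case False
      have c: "cnt T x \<le> card T" using cnt_le_card[OF assms(2)] .
      hence "entry T (cnt T x) < entry S (cnt T x)" using h False assms(3) by simp
      thus ?thesis using less_via_cnt[OF assms(2,1), of "cnt T x" "cnt T x"] False c by simp
    qed simp
  qed
next
  assume h: "\<forall>x. cnt T x \<le> cnt S (Suc x)"
  show "\<forall>i. 1 \<le> i \<and> i \<le> card S \<longrightarrow> entry T i < entry S i"
  proof (intro allI impI)
    fix i assume i: "1 \<le> i \<and> i \<le> card S"
    show "entry T i < entry S i"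
    proof (cases "i \<le> card T")
      case True
      have "\<forall>x. i \<le> cnt T x \<longrightarrow> i \<le> cnt S (Suc x)" using h le_trans by blast
      thus ?thesis using less_via_cnt[OF assms(2,1), of i i] i True by simp
    next
      case False
      thus ?thesis using entry_out[of i T] entry_in[of i S] i by simp
    qed
  qed
qed

lemma GLe:
  assumes "finite S" "finite T" "card T \<le> card S + 1"
  shows "(\<forall>i. 1 \<le> i \<and> i \<le> card S \<longrightarrow> entry T (i + 1) \<le> entry S i) \<longleftrightarrow> (\<forall>x. cnt T x \<le> cnt S x + 1)"
proof
  assume h: "\<forall>i. 1 \<le> i \<and> i \<le> card S \<longrightarrow> entry T (i + 1) \<le> entry S i"
  show "\<forall>x. cnt T x \<le> cnt S x + 1"
  proof
    fix x
    show "cnt T x \<le> cnt S x + 1"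
    proof (cases "cnt T x \<le> 1")
      case False
      have c: "cnt T x \<le> card T" using cnt_le_card[OF assms(2)] .
      hence "entry T (cnt T x - 1 + 1) \<le> entry S (cnt T x - 1)" using h False assms(3)
        by (intro h[rule_format]) (use c False assms(3) in linarith)
      hence "\<forall>y. cnt T x \<le> cnt T y \<longrightarrow> cnt T x - 1 \<le> cnt S y"
        using le_via_cnt[OF assms(2,1), of "cnt T x - 1 + 1" "cnt T x - 1"] False by simp
      hence "cnt T x - 1 \<le> cnt S x" by blast
      thus ?thesis by linarith
    qed simp
  qed
next
  assume h: "\<forall>x. cnt T x \<le> cnt S x + 1"
  show "\<forall>i. 1 \<le> i \<and> i \<le> card S \<longrightarrow> entry T (i + 1) \<le> entry S i"
  proof (intro allI impI)
    fix i assume i: "1 \<le> i \<and> i \<le> card S"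
    show "entry T (i + 1) \<le> entry S i"
    proof -
      have "\<forall>x. i + 1 \<le> cnt T x \<longrightarrow> i \<le> cnt S x"
      proof (intro allI impI)
        fix x assume "i + 1 \<le> cnt T x" thus "i \<le> cnt S x" using h[rule_format, of x] by linarith
      qed
      thus ?thesis using le_via_cnt[OF assms(2,1), of "i + 1" i] i by simp
    qed
  qed
qed

lemma GLf:
  assumes "finite S" "finite T" "card T \<le> card S"
  shows "(\<forall>i. 1 \<le> i \<and> i \<le> card S \<longrightarrow> entry T (i + 1) < entry S i) \<longleftrightarrow> (\<forall>x. cnt T x \<le> cnt S (Suc x) + 1)"
proof
  assume h: "\<forall>i. 1 \<le> i \<and> i \<le> card S \<longrightarrow> entry T (i + 1) < entry S i"
  show "\<forall>x. cnt T x \<le> cnt S (Suc x) + 1"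
  proof
    fix x
    show "cnt T x \<le> cnt S (Suc x) + 1"
    proof (cases "cnt T x \<le> 1")
      case False
      have c: "cnt T x \<le> card T" using cnt_le_card[OF assms(2)] .
      hence "entry T (cnt T x - 1 + 1) < entry S (cnt T x - 1)" using h False assms(3)
        by (intro h[rule_format]) (use c False assms(3) in linarith)
      hence "\<forall>y. cnt T x \<le> cnt T y \<longrightarrow> cnt T x - 1 \<le> cnt S (Suc y)"
        using less_via_cnt[OF assms(2,1), of "cnt T x - 1 + 1" "cnt T x - 1"] False c by simp
      hence "cnt T x - 1 \<le> cnt S (Suc x)" by blast
      thus ?thesis by linarith
    qed simp
  qed
next
  assume h: "\<forall>x. cnt T x \<le> cnt S (Suc x) + 1"
  show "\<forall>i. 1 \<le> i \<and> i \<le> card S \<longrightarrow> entry T (i + 1) < entry S i"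
  proof (intro allI impI)
    fix i assume i: "1 \<le> i \<and> i \<le> card S"
    show "entry T (i + 1) < entry S i"
    proof (cases "i + 1 \<le> card T")
      case True
      have "\<forall>x. i + 1 \<le> cnt T x \<longrightarrow> i \<le> cnt S (Suc x)"
      proof (intro allI impI)
        fix x assume "i + 1 \<le> cnt T x" thus "i \<le> cnt S (Suc x)" using h[rule_format, of x] by linarith
      qed
      thus ?thesis using less_via_cnt[OF assms(2,1), of "i + 1" i] i True by simp
    next
      case False
      thus ?thesis using entry_out[of "i + 1" T] entry_in[of i S] i by simp
    qed
  qed
qed

lemma GLg:
  assumes "finite S" "finite T"
  shows "(\<forall>i. 1 \<le> i \<and> i \<le> card S \<longrightarrow> entry S i < bentry T (i - 1)) \<longleftrightarrow> (\<forall>x. cnt S x \<le> cnt T (Suc x) + 1)"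
proof
  assume h: "\<forall>i. 1 \<le> i \<and> i \<le> card S \<longrightarrow> entry S i < bentry T (i - 1)"
  show "\<forall>x. cnt S x \<le> cnt T (Suc x) + 1"
  proof
    fix x
    show "cnt S x \<le> cnt T (Suc x) + 1"
    proof (cases "cnt S x \<le> 1")
      case False
      have c: "cnt S x \<le> card S" using cnt_le_card[OF assms(1)] .
      hence "entry S (cnt S x) < entry T (cnt S x - 1)" using h[rule_format, of "cnt S x"] False
        by (simp add: bentry_def)
      hence "\<forall>y. cnt S x \<le> cnt S y \<longrightarrow> cnt S x - 1 \<le> cnt T (Suc y)"
        using less_via_cnt[OF assms, of "cnt S x" "cnt S x - 1"] False c by simp
      hence "cnt S x - 1 \<le> cnt T (Suc x)" by blast
      thus ?thesis by linarith
    qed simp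
  qed
next
  assume h: "\<forall>x. cnt S x \<le> cnt T (Suc x) + 1"
  show "\<forall>i. 1 \<le> i \<and> i \<le> card S \<longrightarrow> entry S i < bentry T (i - 1)"
  proof (intro allI impI)
    fix i assume i: "1 \<le> i \<and> i \<le> card S"
    show "entry S i < bentry T (i - 1)"
    proof (cases "i = 1")
      case True
      thus ?thesis using entry_in[of i S] i by (simp add: bentry_def)
    next
      case False
      have "\<forall>x. i \<le> cnt S x \<longrightarrow> i - 1 \<le> cnt T (Suc x)"
      proof (intro allI impI)
        fix x assume "i \<le> cnt S x" thus "i - 1 \<le> cnt T (Suc x)" using h[rule_format, of x] by linarith
      qed
      moreover have "1 \<le> i - 1" using i False by linarith
      ultimately have "entry S i < entry T (i - 1)" using less_via_cnt[OF assms, of i "i - 1"] i by blast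
      thus ?thesis using False i by (simp add: bentry_def)
    qed
  qed
qed

lemma GLh:
  assumes "finite S" "finite T"
  shows "(\<forall>i. 1 \<le> i \<and> i \<le> card S \<longrightarrow> entry S i \<le> bentry T (i - 1)) \<longleftrightarrow> (\<forall>x. cnt S x \<le> cnt T x + 1)"
proof
  assume h: "\<forall>i. 1 \<le> i \<and> i \<le> card S \<longrightarrow> entry S i \<le> bentry T (i - 1)"
  show "\<forall>x. cnt S x \<le> cnt T x + 1"
  proof
    fix x
    show "cnt S x \<le> cnt T x + 1"
    proof (cases "cnt S x \<le> 1")
      case False
      have c: "cnt S x \<le> card S" using cnt_le_card[OF assms(1)] .
      hence "entry S (cnt S x) \<le> entry T (cnt S x - 1)" using h[rule_format, of "cnt S x"] False
        by (simp add: bentry_def)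
      hence "\<forall>y. cnt S x \<le> cnt S y \<longrightarrow> cnt S x - 1 \<le> cnt T y"
        using le_via_cnt[OF assms, of "cnt S x" "cnt S x - 1"] False c by simp
      hence "cnt S x - 1 \<le> cnt T x" by blast
      thus ?thesis by linarith
    qed simp
  qed
next
  assume h: "\<forall>x. cnt S x \<le> cnt T x + 1"
  show "\<forall>i. 1 \<le> i \<and> i \<le> card S \<longrightarrow> entry S i \<le> bentry T (i - 1)"
  proof (intro allI impI)
    fix i assume i: "1 \<le> i \<and> i \<le> card S"
    show "entry S i \<le> bentry T (i - 1)"
    proof (cases "i = 1")
      case True
      thus ?thesis by (simp add: bentry_def)
    next
      case False
      have "\<forall>x. i \<le> cnt S x \<longrightarrow> i - 1 \<le> cnt T x"
      proof (intro allI impI)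
        fix x assume "i \<le> cnt S x" thus "i - 1 \<le> cnt T x" using h[rule_format, of x] by linarith
      qed
      moreover have "1 \<le> i - 1" using i False by linarith
      ultimately have "entry S i \<le> entry T (i - 1)" using le_via_cnt[OF assms, of i "i - 1"] i by blast
      thus ?thesis using False i by (simp add: bentry_def)
    qed
  qed
qed




lemma xor3_pick:
  fixes x y1 y2 y3 :: int
  assumes "x = 0 \<or> x = 1" "y1 = 0 \<or> y1 = 1" "y2 = 0 \<or> y2 = 1" "y3 = 0 \<or> y3 = 1"
    "x mod 2 = (y1 + y2 + y3) mod 2"
  shows "x = y1 \<or> x = y2 \<or> x = y3"
  using assms by (elim disjE) auto

lemma xor_step:
  fixes a1 a2 a3 a b1 b2 b3 b lam mu :: int
  assumes "0 \<le> a1" "0 \<le> a2" "0 \<le> a3" "0 \<le> a" "a \<le> 1"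
    "0 \<le> b1" "b1 \<le> 1" "0 \<le> b2" "b2 \<le> 1" "0 \<le> b3" "b3 \<le> 1" "0 \<le> b" "b \<le> 1"
    "a mod 2 = (a1 + a2 + a3) mod 2" "b mod 2 = (b1 + b2 + b3) mod 2"
    "a1 + b1 \<le> 1" "a2 + b2 \<le> 1" "a3 + b3 \<le> 1"
    "lam \<le> a1 + b1" "lam \<le> a2 + b2" "lam \<le> a3 + b3"
    "(b1 = b2 \<and> b2 = b3) \<or> lam + mu = 1"
    "mu \<le> 1" "a \<le> 1 - mu" "a1 \<le> 1 - mu" "a2 \<le> 1 - mu" "a3 \<le> 1 - mu"
  shows "a + b \<le> 1 \<and> (a + b = a1 + b1 \<or> a + b = a2 + b2 \<or> a + b = a3 + b3)"
proof -
  have A: "a = 0 \<or> a = 1" "a1 = 0 \<or> a1 = 1" "a2 = 0 \<or> a2 = 1" "a3 = 0 \<or> a3 = 1"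
    "b = 0 \<or> b = 1" "b1 = 0 \<or> b1 = 1" "b2 = 0 \<or> b2 = 1" "b3 = 0 \<or> b3 = 1"
    using assms by linarith+
  have pa: "a = a1 \<or> a = a2 \<or> a = a3" using xor3_pick[OF A(1-4)] assms(14) .
  show ?thesis
  proof (cases "b1 = b2 \<and> b2 = b3")
    case True
    hence "b = b1" using A(5,6) assms(15) by auto
    thus ?thesis using pa True assms(16-18) by auto
  next
    case False
    hence lm: "lam + mu = 1" using assms(22) by blast
    show ?thesis
    proof (cases "mu = 1")
      case True
      hence z: "a = 0" "a1 = 0" "a2 = 0" "a3 = 0" using assms(4,1-3,24-27) by linarith+
      have "b = b1 \<or> b = b2 \<or> b = b3" using xor3_pick[OF A(5-8)] assms(15) .
      thus ?thesis using z A by auto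
    next
      case False
      hence "lam \<ge> 1" using lm assms(23) by linarith
      hence s: "a1 + b1 = 1" "a2 + b2 = 1" "a3 + b3 = 1" using assms(16-21) by linarith+
      have "a + b = 1" using A s assms(14,15) by (elim disjE) auto
      thus ?thesis using s by simp
    qed
  qed
qed


lemma down_induct:
  assumes "\<And>t. T \<le> t \<Longrightarrow> P t" "\<And>t. t < T \<Longrightarrow> P (Suc t) \<Longrightarrow> P t"
  shows "P t"
proof (cases "T \<le> t")
  case True thus ?thesis using assms(1) by blast
next
  case False
  hence "t \<le> T" by simp
  thus ?thesis
  proof (induction rule: inc_induct)
    case base thus ?case using assms(1) by simp
  next
    case (step n) thus ?case using assms(2) by simp
  qed
qed

lemma xor_parity:
  fixes W W1 W2 W3 :: "nat \<Rightarrow> int"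
  assumes top: "\<And>t. T \<le> t \<Longrightarrow> W t = 0 \<and> W1 t = 0 \<and> W2 t = 0 \<and> W3 t = 0"
    and xr: "\<And>t. (W t - W (Suc t)) mod 2 =
      ((W1 t - W1 (Suc t)) + (W2 t - W2 (Suc t)) + (W3 t - W3 (Suc t))) mod 2"
  shows "W t mod 2 = (W1 t + W2 t + W3 t) mod 2"
proof (induction t rule: down_induct[where T=T])
  case (1 t) thus ?case using top by simp
next
  case (2 t)
  have "W t = W (Suc t) + (W t - W (Suc t))" by simp
  hence "W t mod 2 = (W (Suc t) mod 2 + (W t - W (Suc t)) mod 2) mod 2" by (metis mod_add_eq)
  also have "\<dots> = ((W1 (Suc t) + W2 (Suc t) + W3 (Suc t)) mod 2 +
      ((W1 t - W1 (Suc t)) + (W2 t - W2 (Suc t)) + (W3 t - W3 (Suc t))) mod 2) mod 2"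
    using 2 xr by simp
  also have "\<dots> = ((W1 (Suc t) + W2 (Suc t) + W3 (Suc t)) +
      ((W1 t - W1 (Suc t)) + (W2 t - W2 (Suc t)) + (W3 t - W3 (Suc t)))) mod 2"
    by (rule mod_add_eq)
  also have "\<dots> = (W1 t + W2 t + W3 t) mod 2" by (simp add: algebra_simps)
  finally show ?case .
qed

lemma xor_good:
  fixes L W W1 W2 W3 :: "nat \<Rightarrow> int"
  assumes top: "\<And>t. T \<le> t \<Longrightarrow> L t = 0 \<and> W t = 0 \<and> W1 t = 0 \<and> W2 t = 0 \<and> W3 t = 0"
    and st: "\<And>t. 0 \<le> W t - W (Suc t) \<and> W t - W (Suc t) \<le> 1"
      "\<And>t. 0 \<le> W1 t - W1 (Suc t) \<and> W1 t - W1 (Suc t) \<le> 1"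
      "\<And>t. 0 \<le> W2 t - W2 (Suc t) \<and> W2 t - W2 (Suc t) \<le> 1"
      "\<And>t. 0 \<le> W3 t - W3 (Suc t) \<and> W3 t - W3 (Suc t) \<le> 1"
    and xr: "\<And>t. (W t - W (Suc t)) mod 2 =
      ((W1 t - W1 (Suc t)) + (W2 t - W2 (Suc t)) + (W3 t - W3 (Suc t))) mod 2"
    and fr: "\<And>t. (W1 t - W1 (Suc t) = W2 t - W2 (Suc t) \<and> W2 t - W2 (Suc t) = W3 t - W3 (Suc t))
                 \<or> L t - L (Suc (Suc t)) = 1"
    and g1: "\<And>t. L t \<le> W1 t \<and> W1 t \<le> L (Suc t) + 1"
    and g2: "\<And>t. L t \<le> W2 t \<and> W2 t \<le> L (Suc t) + 1"
    and g3: "\<And>t. L t \<le> W3 t \<and> W3 t \<le> L (Suc t) + 1"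
  shows "L t \<le> W t \<and> W t \<le> L (Suc t) + 1"
proof -
  have par: "\<And>t. W t mod 2 = (W1 t + W2 t + W3 t) mod 2"
    using xor_parity[of T W W1 W2 W3] top xr by blast
  have "L t \<le> W t \<and> W t \<le> L (Suc t) + 1 \<and>
        (W t - L t = W1 t - L t \<or> W t - L t = W2 t - L t \<or> W t - L t = W3 t - L t)"
  proof (induction t rule: down_induct[where T=T])
    case (1 t) thus ?case using top[of t] top[of "Suc t"] by simp
  next
    case (2 t)
    define a where "a = W (Suc t) - L (Suc t)"
    define a1 where "a1 = W1 (Suc t) - L (Suc t)"
    define a2 where "a2 = W2 (Suc t) - L (Suc t)"
    define a3 where "a3 = W3 (Suc t) - L (Suc t)"
    define b where "b = W t - W (Suc t)"
    define b1 where "b1 = W1 t - W1 (Suc t)"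
    define b2 where "b2 = W2 t - W2 (Suc t)"
    define b3 where "b3 = W3 t - W3 (Suc t)"
    define lam where "lam = L t - L (Suc t)"
    define mu where "mu = L (Suc t) - L (Suc (Suc t))"
    have IH: "L (Suc t) \<le> W (Suc t)" "W (Suc t) \<le> L (Suc (Suc t)) + 1"
      "W (Suc t) - L (Suc t) = a1 \<or> W (Suc t) - L (Suc t) = a2 \<or> W (Suc t) - L (Suc t) = a3"
      using 2(2) by (auto simp: a1_def a2_def a3_def)
    have G: "L t \<le> W1 t" "W1 t \<le> L (Suc t) + 1" "L (Suc t) \<le> W1 (Suc t)" "W1 (Suc t) \<le> L (Suc (Suc t)) + 1"
            "L t \<le> W2 t" "W2 t \<le> L (Suc t) + 1" "L (Suc t) \<le> W2 (Suc t)" "W2 (Suc t) \<le> L (Suc (Suc t)) + 1"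
            "L t \<le> W3 t" "W3 t \<le> L (Suc t) + 1" "L (Suc t) \<le> W3 (Suc t)" "W3 (Suc t) \<le> L (Suc (Suc t)) + 1"
      using g1[of t] g1[of "Suc t"] g2[of t] g2[of "Suc t"] g3[of t] g3[of "Suc t"] by auto
    have S: "0 \<le> b" "b \<le> 1" "0 \<le> b1" "b1 \<le> 1" "0 \<le> b2" "b2 \<le> 1" "0 \<le> b3" "b3 \<le> 1"
      using st[of t] by (auto simp: b_def b1_def b2_def b3_def)
    have pa: "a mod 2 = (a1 + a2 + a3) mod 2"
    proof -
      have "a mod 2 = (W (Suc t) mod 2 - L (Suc t)) mod 2" by (simp add: a_def mod_diff_left_eq)
      also have "\<dots> = ((W1 (Suc t) + W2 (Suc t) + W3 (Suc t)) mod 2 - L (Suc t)) mod 2"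
        using par by simp
      also have "\<dots> = (W1 (Suc t) + W2 (Suc t) + W3 (Suc t) - L (Suc t)) mod 2"
        by (simp add: mod_diff_left_eq)
      also have "\<dots> = (a1 + a2 + a3 + 2 * L (Suc t)) mod 2"
        by (simp add: a1_def a2_def a3_def algebra_simps)
      also have "\<dots> = (a1 + a2 + a3) mod 2" by simp
      finally show ?thesis .
    qed
    have "b mod 2 = (b1 + b2 + b3) mod 2" using xr[of t] by (simp add: b_def b1_def b2_def b3_def)
    note pb = this
    have frr: "(b1 = b2 \<and> b2 = b3) \<or> lam + mu = 1" using fr[of t]
      by (auto simp: b1_def b2_def b3_def lam_def mu_def)
    have "a \<le> 1" using IH(3) G st(2-4)[of t] by (auto simp: a_def a1_def a2_def a3_def)
    have X: "a + b \<le> 1 \<and> (a + b = a1 + b1 \<or> a + b = a2 + b2 \<or> a + b = a3 + b3)"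
      apply (rule xor_step[where lam=lam and mu=mu])
      using G IH S pa pb frr \<open>a \<le> 1\<close>
      by (simp_all add: a_def a1_def a2_def a3_def b_def b1_def b2_def b3_def lam_def mu_def)
    show ?case using X
      by (auto simp: a_def a1_def a2_def a3_def b_def b1_def b2_def b3_def G)
  qed
  thus ?thesis by blast
qed




definition xs :: "nat set \<Rightarrow> nat set \<Rightarrow> nat set" where
  "xs A B = (A \<union> B) - (A \<inter> B)"

lemma move_fst: "M \<subseteq> singles Z \<Longrightarrow> x \<in> fst (move Z M) \<longleftrightarrow> (x \<in> fst Z) \<noteq> (x \<in> M)"
  by (auto simp: move_def singles_def)

lemma move_snd: "M \<subseteq> singles Z \<Longrightarrow> x \<in> snd (move Z M) \<longleftrightarrow> (x \<in> snd Z) \<noteq> (x \<in> M)"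
  by (auto simp: move_def singles_def)

lemma move_finite: "finite (fst Z) \<Longrightarrow> finite (snd Z) \<Longrightarrow> finite (fst (move Z M)) \<and> finite (snd (move Z M))"
  by (auto simp: move_def)

lemma move_empty: "move Z {} = Z"
  by (simp add: move_def)

lemma moved_set_move: "M \<subseteq> singles Z \<Longrightarrow> moved_set Z (move Z M) = M"
  by (auto simp: moved_set_def move_def singles_def)

lemma sym_sum_move: "M1 \<subseteq> singles Z \<Longrightarrow> M2 \<subseteq> singles Z \<Longrightarrow>
   sym_sum Z (move Z M1) (move Z M2) = move Z (xs M1 M2)"
  by (simp add: sym_sum_def moved_set_move xs_def)

lemma xs_sub: "M1 \<subseteq> S \<Longrightarrow> M2 \<subseteq> S \<Longrightarrow> xs M1 M2 \<subseteq> S"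
  by (auto simp: xs_def)

lemma xs_mem: "x \<in> xs A B \<longleftrightarrow> (x \<in> A) \<noteq> (x \<in> B)"
  by (auto simp: xs_def)

lemma Sbar_iff: "X \<in> Sbar Z \<longleftrightarrow> (\<exists>M. M \<subseteq> singles Z \<and> X = move Z M)"
  by (auto simp: Sbar_def)

lemma cnt_sum_UnInt:
  assumes "finite P" "finite Q"
  shows "cnt P x + cnt Q x = card {s \<in> P \<union> Q. x \<le> s} + card {s \<in> P \<inter> Q. x \<le> s}"
proof -
  have "card ({s\<in>P. x \<le> s} \<union> {s\<in>Q. x \<le> s}) + card ({s\<in>P. x \<le> s} \<inter> {s\<in>Q. x \<le> s})
        = card {s\<in>P. x \<le> s} + card {s\<in>Q. x \<le> s}"
    using card_Un_Int[of "{s\<in>P. x \<le> s}" "{s\<in>Q. x \<le> s}"] assms by simp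
  moreover have "{s\<in>P. x \<le> s} \<union> {s\<in>Q. x \<le> s} = {s \<in> P \<union> Q. x \<le> s}" by auto
  moreover have "{s\<in>P. x \<le> s} \<inter> {s\<in>Q. x \<le> s} = {s \<in> P \<inter> Q. x \<le> s}" by auto
  ultimately show ?thesis by (simp add: cnt_def)
qed

lemma move_cnt_sum:
  assumes "M \<subseteq> singles Z" "finite (fst Z)" "finite (snd Z)"
  shows "cnt (fst (move Z M)) x + cnt (snd (move Z M)) x = cnt (fst Z) x + cnt (snd Z) x"
proof -
  have u: "fst (move Z M) \<union> snd (move Z M) = fst Z \<union> snd Z"
    using assms(1) by (auto simp: move_def singles_def)
  have i: "fst (move Z M) \<inter> snd (move Z M) = fst Z \<inter> snd Z"
    using assms(1) by (auto simp: move_def singles_def)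
  have f: "finite (fst (move Z M))" "finite (snd (move Z M))" using move_finite[OF assms(2,3)] by auto
  show ?thesis using cnt_sum_UnInt[OF f, of x] cnt_sum_UnInt[OF assms(2,3), of x] u i
    by simp
qed

definition Fc :: "symbol \<Rightarrow> nat \<Rightarrow> int" where
  "Fc Z x = int (cnt (fst Z) x + cnt (snd Z) x)"

definition Lf :: "bool \<Rightarrow> symbol \<Rightarrow> symbol \<Rightarrow> nat \<Rightarrow> int" where
  "Lf e Z Z' t = (if e = even t then Fc Z (t div 2) else Fc Z' (t div 2))"

definition Wf :: "bool \<Rightarrow> nat set \<Rightarrow> nat set \<Rightarrow> nat \<Rightarrow> int" where
  "Wf e A C t = int (if even t then cnt A (t div 2) + cnt C (t div 2)
      else if e then cnt A (t div 2 + 1) + cnt C (t div 2) else cnt A (t div 2) + cnt C (t div 2 + 1))"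

definition Good :: "bool \<Rightarrow> symbol \<Rightarrow> symbol \<Rightarrow> nat set \<Rightarrow> nat set \<Rightarrow> bool" where
  "Good e Z Z' A C \<longleftrightarrow> (\<forall>t. Lf e Z Z' t \<le> Wf e A C t \<and> Wf e A C t \<le> Lf e Z Z' (Suc t) + 1)"

lemma all_even_odd: "(\<forall>t::nat. P t) \<longleftrightarrow> (\<forall>x. P (2 * x) \<and> P (Suc (2 * x)))"
proof
  assume "\<forall>x. P (2 * x) \<and> P (Suc (2 * x))"
  thus "\<forall>t. P t" by (metis evenE oddE Suc_eq_plus1)
qed simp

lemma Lf_simps:
  "Lf e Z Z' (2 * x) = (if e then Fc Z x else Fc Z' x)"
  "Lf e Z Z' (Suc (2 * x)) = (if e then Fc Z' x else Fc Z x)"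
  "Lf e Z Z' (Suc (Suc (2 * x))) = (if e then Fc Z (Suc x) else Fc Z' (Suc x))"
  by (auto simp: Lf_def)

lemma Wf_simps:
  "Wf e A C (2 * x) = int (cnt A x) + int (cnt C x)"
  "Wf e A C (Suc (2 * x)) = (if e then int (cnt A (Suc x)) + int (cnt C x) else int (cnt A x) + int (cnt C (Suc x)))"
  by (auto simp: Wf_def)

lemma Good_split:
  "Good e Z Z' A C \<longleftrightarrow> (\<forall>x.
     (if e then Fc Z x else Fc Z' x) \<le> int (cnt A x) + int (cnt C x) \<and>
     int (cnt A x) + int (cnt C x) \<le> (if e then Fc Z' x else Fc Z x) + 1 \<and>
     (if e then Fc Z' x else Fc Z x) \<le> (if e then int (cnt A (Suc x)) + int (cnt C x) else int (cnt A x) + int (cnt C (Suc x))) \<and>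
     (if e then int (cnt A (Suc x)) + int (cnt C x) else int (cnt A x) + int (cnt C (Suc x))) \<le> (if e then Fc Z (Suc x) else Fc Z' (Suc x)) + 1)"
  unfolding Good_def all_even_odd[where P="\<lambda>t. Lf e Z Z' t \<le> Wf e A C t \<and> Wf e A C t \<le> Lf e Z Z' (Suc t) + 1"]
  by (simp only: Lf_simps Wf_simps) blast

lemma Bcond_iff:
  fixes Z Z' L L' :: symbol
  assumes fZ: "finite (fst Z)" "finite (snd Z)" and fZ': "finite (fst Z')" "finite (snd Z')"
    and cZ: "card (fst Z) = card (snd Z) + 1" and cZ': "card (fst Z') = card (snd Z')"
    and mm: "card (snd Z') = card (snd Z) \<or> card (snd Z') = card (snd Z) + 1"
    and fL: "finite (fst L)" "finite (snd L)" and fL': "finite (fst L')" "finite (snd L')"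
    and sL: "\<And>x. cnt (fst L) x + cnt (snd L) x = cnt (fst Z) x + cnt (snd Z) x"
    and sL': "\<And>x. cnt (fst L') x + cnt (snd L') x = cnt (fst Z') x + cnt (snd Z') x"
  shows "Bcond (card (snd Z)) (card (snd Z')) L L' \<longleftrightarrow>
         Good (card (snd Z') = card (snd Z)) Z Z' (fst L) (fst L')"
proof -
  define A where "A = fst L"
  define B where "B = snd L"
  define C where "C = fst L'"
  define D where "D = snd L'"
  define m where "m = card (snd Z)"
  define m' where "m' = card (snd Z')"
  have fA: "finite A" and fB: "finite B" and fC: "finite C" and fD: "finite D"
    using fL fL' by (auto simp: A_def B_def C_def D_def)
  have F: "\<And>x. Fc Z x = int (cnt A x) + int (cnt B x)"
    unfolding Fc_def A_def B_def using sL by (metis of_nat_add)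
  have G: "\<And>x. Fc Z' x = int (cnt C x) + int (cnt D x)"
    unfolding Fc_def C_def D_def using sL' by (metis of_nat_add)
  have cAB: "card A + card B = 2 * m + 1" using sL[of 0] cZ by (simp add: cnt_0 A_def B_def m_def)
  have cCD: "card C + card D = 2 * m'" using sL'[of 0] cZ' by (simp add: cnt_0 C_def D_def m'_def)
  have def_eq: "defect L' = 1 - defect L \<longleftrightarrow> int (card C) - int (card D) = 1 - (int (card A) - int (card B))"
    by (simp add: defect_def A_def B_def C_def D_def)
  show ?thesis
  proof (cases "m' = m")
    case True
    have Bc: "Bcond (card (snd Z)) (card (snd Z')) L L' \<longleftrightarrow> defect L' = 1 - defect L \<and>
       (\<forall>i. 1 \<le> i \<and> i \<le> card D \<longrightarrow> entry D i < entry A i \<and> entry A (i + 1) \<le> entry D i) \<and>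
       (\<forall>i. 1 \<le> i \<and> i \<le> card C \<longrightarrow> entry C i < bentry B (i - 1) \<and> entry B i \<le> entry C i)"
      using True by (simp add: Bcond_def A_def B_def C_def D_def m_def m'_def)
    have Gd: "Good (card (snd Z') = card (snd Z)) Z Z' (fst L) (fst L') \<longleftrightarrow>
      (\<forall>x. cnt D x \<le> cnt A (Suc x) \<and> cnt A x \<le> cnt D x + 1 \<and> cnt C x \<le> cnt B (Suc x) + 1 \<and> cnt B x \<le> cnt C x)"
      unfolding Good_split A_def[symmetric] C_def[symmetric]
      apply (rule all_cong1)
      using True F G by (simp add: m_def m'_def) linarith
    show ?thesis
    proof
      assume h: "Bcond (card (snd Z)) (card (snd Z')) L L'"
      hence cc: "card A = card D + 1" "card B = card C" using Bc def_eq cAB cCD True by auto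
      have "\<forall>x. cnt D x \<le> cnt A (Suc x)" using h Bc GLc[OF fD fA] by blast
      moreover have "\<forall>x. cnt A x \<le> cnt D x + 1" using h Bc GLe[OF fD fA] cc by simp
      moreover have "\<forall>x. cnt C x \<le> cnt B (Suc x) + 1" using h Bc GLg[OF fC fB] by blast
      moreover have "\<forall>x. cnt B x \<le> cnt C x" using h Bc GLb[OF fC fB] cc by simp
      ultimately show "Good (card (snd Z') = card (snd Z)) Z Z' (fst L) (fst L')" using Gd by blast
    next
      assume h: "Good (card (snd Z') = card (snd Z)) Z Z' (fst L) (fst L')"
      hence T: "\<forall>x. cnt D x \<le> cnt A (Suc x)" "\<forall>x. cnt A x \<le> cnt D x + 1"
        "\<forall>x. cnt C x \<le> cnt B (Suc x) + 1" "\<forall>x. cnt B x \<le> cnt C x" using Gd by auto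
      have "card A \<le> card D + 1" "card B \<le> card C" using T(2)[rule_format, of 0] T(4)[rule_format, of 0]
        by (simp_all add: cnt_0)
      hence cc: "card A = card D + 1" "card B = card C" using cAB cCD True by auto
      have "defect L' = 1 - defect L" using def_eq cc by simp
      moreover have "\<forall>i. 1 \<le> i \<and> i \<le> card D \<longrightarrow> entry D i < entry A i" using T(1) GLc[OF fD fA] by blast
      moreover have "\<forall>i. 1 \<le> i \<and> i \<le> card D \<longrightarrow> entry A (i + 1) \<le> entry D i" using T(2) GLe[OF fD fA] cc by simp
      moreover have "\<forall>i. 1 \<le> i \<and> i \<le> card C \<longrightarrow> entry C i < bentry B (i - 1)" using T(3) GLg[OF fC fB] by blast
      moreover have "\<forall>i. 1 \<le> i \<and> i \<le> card C \<longrightarrow> entry B i \<le> entry C i" using T(4) GLb[OF fC fB] cc by simp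
      ultimately show "Bcond (card (snd Z)) (card (snd Z')) L L'" using Bc by blast
    qed
  next
    case False
    hence m1: "m' = m + 1" using mm by (simp add: m_def m'_def)
    have Bc: "Bcond (card (snd Z)) (card (snd Z')) L L' \<longleftrightarrow> defect L' = 1 - defect L \<and>
       (\<forall>i. 1 \<le> i \<and> i \<le> card D \<longrightarrow> entry D i \<le> entry A i \<and> entry A (i + 1) < entry D i) \<and>
       (\<forall>i. 1 \<le> i \<and> i \<le> card C \<longrightarrow> entry C i \<le> bentry B (i - 1) \<and> entry B i < entry C i)"
      using False by (simp add: Bcond_def A_def B_def C_def D_def m_def m'_def)
    have Gd: "Good (card (snd Z') = card (snd Z)) Z Z' (fst L) (fst L') \<longleftrightarrow>
      (\<forall>x. cnt D x \<le> cnt A x \<and> cnt A x \<le> cnt D (Suc x) + 1 \<and> cnt C x \<le> cnt B x + 1 \<and> cnt B x \<le> cnt C (Suc x))"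
      unfolding Good_split A_def[symmetric] C_def[symmetric]
      apply (rule all_cong1)
      using False F G by (simp add: m_def m'_def) linarith
    show ?thesis
    proof
      assume h: "Bcond (card (snd Z)) (card (snd Z')) L L'"
      hence cc: "card A = card D" "card C = card B + 1" using Bc def_eq cAB cCD m1 by auto
      have "\<forall>x. cnt D x \<le> cnt A x" using h Bc GLa[OF fD fA] by blast
      moreover have "\<forall>x. cnt A x \<le> cnt D (Suc x) + 1" using h Bc GLf[OF fD fA] cc by simp
      moreover have "\<forall>x. cnt C x \<le> cnt B x + 1" using h Bc GLh[OF fC fB] by blast
      moreover have "\<forall>x. cnt B x \<le> cnt C (Suc x)" using h Bc GLd[OF fC fB] cc by simp
      ultimately show "Good (card (snd Z') = card (snd Z)) Z Z' (fst L) (fst L')" using Gd by blast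
    next
      assume h: "Good (card (snd Z') = card (snd Z)) Z Z' (fst L) (fst L')"
      hence T: "\<forall>x. cnt D x \<le> cnt A x" "\<forall>x. cnt A x \<le> cnt D (Suc x) + 1"
        "\<forall>x. cnt C x \<le> cnt B x + 1" "\<forall>x. cnt B x \<le> cnt C (Suc x)" using Gd by auto
      have "card D \<le> card A" "card C \<le> card B + 1" using T(1)[rule_format, of 0] T(3)[rule_format, of 0]
        by (simp_all add: cnt_0)
      hence cc: "card A = card D" "card C = card B + 1" using cAB cCD m1 by auto
      have "defect L' = 1 - defect L" using def_eq cc by simp
      moreover have "\<forall>i. 1 \<le> i \<and> i \<le> card D \<longrightarrow> entry D i \<le> entry A i" using T(1) GLa[OF fD fA] by blast
      moreover have "\<forall>i. 1 \<le> i \<and> i \<le> card D \<longrightarrow> entry A (i + 1) < entry D i" using T(2) GLf[OF fD fA] cc by simp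
      moreover have "\<forall>i. 1 \<le> i \<and> i \<le> card C \<longrightarrow> entry C i \<le> bentry B (i - 1)" using T(3) GLh[OF fC fB] by blast
      moreover have "\<forall>i. 1 \<le> i \<and> i \<le> card C \<longrightarrow> entry B i < entry C i" using T(4) GLd[OF fC fB] cc by simp
      ultimately show "Bcond (card (snd Z)) (card (snd Z')) L L'" using Bc by blast
    qed
  qed
qed




lemma Wf_step:
  assumes "finite A" "finite C"
  shows "Wf e A C t - Wf e A C (Suc t) =
    (if e = even t then (if t div 2 \<in> A then 1 else 0) else (if t div 2 \<in> C then 1 else 0))"
proof (cases "even t")
  case True
  then obtain x where x: "t = 2 * x" by (rule evenE)
  have w1: "Wf e A C t = int (cnt A x) + int (cnt C x)" using Wf_simps(1)[of e A C x] x by simp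
  have w2: "Wf e A C (Suc t) = (if e then int (cnt A (Suc x)) + int (cnt C x) else int (cnt A x) + int (cnt C (Suc x)))"
    using Wf_simps(2)[of e A C x] x by simp
  have d: "t div 2 = x" "even t" using x by auto
  have c1: "int (cnt A x) = int (cnt A (Suc x)) + (if x \<in> A then 1 else 0)" using cnt_Suc[OF assms(1), of x] by simp
  have c2: "int (cnt C x) = int (cnt C (Suc x)) + (if x \<in> C then 1 else 0)" using cnt_Suc[OF assms(2), of x] by simp
  show ?thesis unfolding w1 w2 d(1) using d(2) c1 c2 by (cases e) auto
next
  case False
  then obtain x where x: "t = Suc (2 * x)" by (rule oddE) simp
  have w1: "Wf e A C t = (if e then int (cnt A (Suc x)) + int (cnt C x) else int (cnt A x) + int (cnt C (Suc x)))"
    using Wf_simps(2)[of e A C x] x by simp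
  have "Suc t = 2 * Suc x" using x by simp
  hence w2: "Wf e A C (Suc t) = int (cnt A (Suc x)) + int (cnt C (Suc x))" using Wf_simps(1)[of e A C "Suc x"] by simp
  have d: "t div 2 = x" "odd t" using x by auto
  have c1: "int (cnt A x) = int (cnt A (Suc x)) + (if x \<in> A then 1 else 0)" using cnt_Suc[OF assms(1), of x] by simp
  have c2: "int (cnt C x) = int (cnt C (Suc x)) + (if x \<in> C then 1 else 0)" using cnt_Suc[OF assms(2), of x] by simp
  show ?thesis unfolding w1 w2 d(1) using d(2) c1 c2 by (cases e) auto
qed

lemma Fc_step:
  assumes "finite (fst Z)" "finite (snd Z)"
  shows "Fc Z x - Fc Z (Suc x) = (if x \<in> fst Z then 1 else 0) + (if x \<in> snd Z then 1 else 0)"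
  using cnt_Suc[OF assms(1), of x] cnt_Suc[OF assms(2), of x] by (simp add: Fc_def)

lemma Lf_step2:
  "Lf e Z Z' t - Lf e Z Z' (Suc (Suc t)) =
    (if e = even t then Fc Z (t div 2) - Fc Z (Suc (t div 2)) else Fc Z' (t div 2) - Fc Z' (Suc (t div 2)))"
  by (simp add: Lf_def)

lemma ind_xor:
  "(if p \<noteq> ((q1 \<noteq> q2) \<noteq> q3) then 1 else 0::int) mod 2 =
   ((if p \<noteq> q1 then 1 else 0) + (if p \<noteq> q2 then 1 else 0) + (if p \<noteq> q3 then 1 else 0)) mod 2"
  by (cases p; cases q1; cases q2; cases q3) auto

lemma cnt_zero: "finite S \<Longrightarrow> (\<forall>s\<in>S. s < K) \<Longrightarrow> K \<le> x \<Longrightarrow> cnt S x = 0"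
  by (auto simp: cnt_def)


lemma move_fst_sub: "fst (move Z M) \<subseteq> fst Z \<union> snd Z"
  by (auto simp: move_def)

lemma closure3:
  fixes Z Z' :: symbol and M1 M2 M3 N1 N2 N3 :: "nat set"
  assumes fZ: "finite (fst Z)" "finite (snd Z)" and fZ': "finite (fst Z')" "finite (snd Z')"
    and cZ: "card (fst Z) = card (snd Z) + 1" and cZ': "card (fst Z') = card (snd Z')"
    and mm: "card (snd Z') = card (snd Z) \<or> card (snd Z') = card (snd Z) + 1"
    and M: "M1 \<subseteq> singles Z" "M2 \<subseteq> singles Z" "M3 \<subseteq> singles Z"
    and N: "N1 \<subseteq> singles Z'" "N2 \<subseteq> singles Z'" "N3 \<subseteq> singles Z'"
    and B1: "Bcond (card (snd Z)) (card (snd Z')) (move Z M1) (move Z' N1)"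
    and B2: "Bcond (card (snd Z)) (card (snd Z')) (move Z M2) (move Z' N2)"
    and B3: "Bcond (card (snd Z)) (card (snd Z')) (move Z M3) (move Z' N3)"
  shows "Bcond (card (snd Z)) (card (snd Z')) (move Z (xs (xs M1 M2) M3)) (move Z' (xs (xs N1 N2) N3))"
proof -
  define e where "e = (card (snd Z') = card (snd Z))"
  define M where "M = xs (xs M1 M2) M3"
  define N where "N = xs (xs N1 N2) N3"
  have MS: "M \<subseteq> singles Z" using M by (simp add: M_def xs_sub)
  have NS: "N \<subseteq> singles Z'" using N by (simp add: N_def xs_sub)
  have BI: "\<And>P Q. P \<subseteq> singles Z \<Longrightarrow> Q \<subseteq> singles Z' \<Longrightarrow>
     Bcond (card (snd Z)) (card (snd Z')) (move Z P) (move Z' Q) \<longleftrightarrow> Good e Z Z' (fst (move Z P)) (fst (move Z' Q))"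
    unfolding e_def
    by (rule Bcond_iff[OF fZ fZ' cZ cZ' mm]) (simp_all add: move_finite fZ fZ' move_cnt_sum)
  define A where "A = fst (move Z M)"
  define A1 where "A1 = fst (move Z M1)"
  define A2 where "A2 = fst (move Z M2)"
  define A3 where "A3 = fst (move Z M3)"
  define C where "C = fst (move Z' N)"
  define C1 where "C1 = fst (move Z' N1)"
  define C2 where "C2 = fst (move Z' N2)"
  define C3 where "C3 = fst (move Z' N3)"
  have G1: "Good e Z Z' A1 C1" using BI[OF M(1) N(1)] B1 by (simp add: A1_def C1_def)
  have G2: "Good e Z Z' A2 C2" using BI[OF M(2) N(2)] B2 by (simp add: A2_def C2_def)
  have G3: "Good e Z Z' A3 C3" using BI[OF M(3) N(3)] B3 by (simp add: A3_def C3_def)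
  have fin: "finite A" "finite A1" "finite A2" "finite A3" "finite C" "finite C1" "finite C2" "finite C3"
    using move_finite[OF fZ] move_finite[OF fZ']
    by (auto simp: A_def A1_def A2_def A3_def C_def C1_def C2_def C3_def)
  define U where "U = fst Z \<union> snd Z \<union> fst Z' \<union> snd Z'"
  have fU: "finite U" using fZ fZ' by (simp add: U_def)
  define K where "K = Suc (Max U)"
  have UK: "\<forall>s\<in>U. s < K" using fU by (auto simp: K_def less_Suc_eq_le)
  have subU: "A \<subseteq> U" "A1 \<subseteq> U" "A2 \<subseteq> U" "A3 \<subseteq> U" "C \<subseteq> U" "C1 \<subseteq> U" "C2 \<subseteq> U" "C3 \<subseteq> U"
    "fst Z \<subseteq> U" "snd Z \<subseteq> U" "fst Z' \<subseteq> U" "snd Z' \<subseteq> U"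
    using move_fst_sub[of Z] move_fst_sub[of Z']
    by (auto simp: U_def A_def A1_def A2_def A3_def C_def C1_def C2_def C3_def)
  have z: "\<And>S x. S \<subseteq> U \<Longrightarrow> finite S \<Longrightarrow> K \<le> x \<Longrightarrow> cnt S x = 0"
    using UK by (intro cnt_zero) auto
  have fzz: "finite (fst Z)" "finite (snd Z)" "finite (fst Z')" "finite (snd Z')" using fZ fZ' by auto
  have dK: "\<And>t. 2 * K \<le> t \<Longrightarrow> K \<le> t div 2" by presburger
  have topW: "\<And>P Q t. P \<subseteq> U \<Longrightarrow> Q \<subseteq> U \<Longrightarrow> finite P \<Longrightarrow> finite Q \<Longrightarrow> 2 * K \<le> t \<Longrightarrow> Wf e P Q t = 0"
  proof -
    fix P Q t assume h: "P \<subseteq> U" "Q \<subseteq> U" "finite P" "finite Q" "2 * K \<le> t"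
    have "K \<le> t div 2" "K \<le> t div 2 + 1" using dK[OF h(5)] by auto
    thus "Wf e P Q t = 0" unfolding Wf_def using z[OF h(1,3)] z[OF h(2,4)] by simp
  qed
  have topL: "\<And>t. 2 * K \<le> t \<Longrightarrow> Lf e Z Z' t = 0"
  proof -
    fix t assume h: "2 * K \<le> t"
    have "K \<le> t div 2" using dK[OF h] by auto
    thus "Lf e Z Z' t = 0" unfolding Lf_def Fc_def using z subU fzz by simp
  qed
  have memA: "\<And>x. x \<in> A \<longleftrightarrow> (x \<in> fst Z) \<noteq> (((x \<in> M1) \<noteq> (x \<in> M2)) \<noteq> (x \<in> M3))"
    using move_fst[OF MS] by (simp add: A_def M_def xs_mem)
  have memC: "\<And>x. x \<in> C \<longleftrightarrow> (x \<in> fst Z') \<noteq> (((x \<in> N1) \<noteq> (x \<in> N2)) \<noteq> (x \<in> N3))"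
    using move_fst[OF NS] by (simp add: C_def N_def xs_mem)
  have memA1: "\<And>x. x \<in> A1 \<longleftrightarrow> (x \<in> fst Z) \<noteq> (x \<in> M1)" using move_fst[OF M(1)] by (simp add: A1_def)
  have memA2: "\<And>x. x \<in> A2 \<longleftrightarrow> (x \<in> fst Z) \<noteq> (x \<in> M2)" using move_fst[OF M(2)] by (simp add: A2_def)
  have memA3: "\<And>x. x \<in> A3 \<longleftrightarrow> (x \<in> fst Z) \<noteq> (x \<in> M3)" using move_fst[OF M(3)] by (simp add: A3_def)
  have memC1: "\<And>x. x \<in> C1 \<longleftrightarrow> (x \<in> fst Z') \<noteq> (x \<in> N1)" using move_fst[OF N(1)] by (simp add: C1_def)
  have memC2: "\<And>x. x \<in> C2 \<longleftrightarrow> (x \<in> fst Z') \<noteq> (x \<in> N2)" using move_fst[OF N(2)] by (simp add: C2_def)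
  have memC3: "\<And>x. x \<in> C3 \<longleftrightarrow> (x \<in> fst Z') \<noteq> (x \<in> N3)" using move_fst[OF N(3)] by (simp add: C3_def)
  have sing: "\<And>x. x \<in> singles Z \<Longrightarrow> Fc Z x - Fc Z (Suc x) = 1"
    using Fc_step[OF fZ] by (auto simp: singles_def)
  have sing': "\<And>x. x \<in> singles Z' \<Longrightarrow> Fc Z' x - Fc Z' (Suc x) = 1"
    using Fc_step[OF fZ'] by (auto simp: singles_def)
  have "Good e Z Z' A C"
    unfolding Good_def
  proof
    fix t
    show "Lf e Z Z' t \<le> Wf e A C t \<and> Wf e A C t \<le> Lf e Z Z' (Suc t) + 1"
    proof (rule xor_good[of "2 * K" "Lf e Z Z'" "Wf e A C" "Wf e A1 C1" "Wf e A2 C2" "Wf e A3 C3"])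
      fix t assume "2 * K \<le> t"
      thus "Lf e Z Z' t = 0 \<and> Wf e A C t = 0 \<and> Wf e A1 C1 t = 0 \<and> Wf e A2 C2 t = 0 \<and> Wf e A3 C3 t = 0"
        using topL topW subU fin by simp
    next
      fix t show "0 \<le> Wf e A C t - Wf e A C (Suc t) \<and> Wf e A C t - Wf e A C (Suc t) \<le> 1"
        using Wf_step[OF fin(1,5)] by simp
    next
      fix t show "0 \<le> Wf e A1 C1 t - Wf e A1 C1 (Suc t) \<and> Wf e A1 C1 t - Wf e A1 C1 (Suc t) \<le> 1"
        using Wf_step[OF fin(2,6)] by simp
    next
      fix t show "0 \<le> Wf e A2 C2 t - Wf e A2 C2 (Suc t) \<and> Wf e A2 C2 t - Wf e A2 C2 (Suc t) \<le> 1"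
        using Wf_step[OF fin(3,7)] by simp
    next
      fix t show "0 \<le> Wf e A3 C3 t - Wf e A3 C3 (Suc t) \<and> Wf e A3 C3 t - Wf e A3 C3 (Suc t) \<le> 1"
        using Wf_step[OF fin(4,8)] by simp
    next
      fix t show "(Wf e A C t - Wf e A C (Suc t)) mod 2 =
        ((Wf e A1 C1 t - Wf e A1 C1 (Suc t)) + (Wf e A2 C2 t - Wf e A2 C2 (Suc t)) + (Wf e A3 C3 t - Wf e A3 C3 (Suc t))) mod 2"
        unfolding Wf_step[OF fin(1,5)] Wf_step[OF fin(2,6)] Wf_step[OF fin(3,7)] Wf_step[OF fin(4,8)]
        unfolding memA memA1 memA2 memA3 memC memC1 memC2 memC3
        using ind_xor by simp
    next
      fix t show "(Wf e A1 C1 t - Wf e A1 C1 (Suc t) = Wf e A2 C2 t - Wf e A2 C2 (Suc t) \<and>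
              Wf e A2 C2 t - Wf e A2 C2 (Suc t) = Wf e A3 C3 t - Wf e A3 C3 (Suc t)) \<or>
             Lf e Z Z' t - Lf e Z Z' (Suc (Suc t)) = 1"
      proof (cases "e = even t")
        case True
        show ?thesis
        proof (cases "t div 2 \<in> singles Z")
          case True
          thus ?thesis using sing \<open>e = even t\<close> by (simp add: Lf_step2)
        next
          case False
          hence "t div 2 \<notin> M1" "t div 2 \<notin> M2" "t div 2 \<notin> M3" using M by auto
          thus ?thesis unfolding Wf_step[OF fin(2,6)] Wf_step[OF fin(3,7)] Wf_step[OF fin(4,8)]
            unfolding memA1 memA2 memA3 using \<open>e = even t\<close> by simp
        qed
      next
        case False
        show ?thesis
        proof (cases "t div 2 \<in> singles Z'")
          case True
          thus ?thesis using sing' \<open>e \<noteq> even t\<close> by (simp add: Lf_step2)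
        next
          case False
          hence "t div 2 \<notin> N1" "t div 2 \<notin> N2" "t div 2 \<notin> N3" using N by auto
          thus ?thesis unfolding Wf_step[OF fin(2,6)] Wf_step[OF fin(3,7)] Wf_step[OF fin(4,8)]
            unfolding memC1 memC2 memC3 using \<open>e \<noteq> even t\<close> by simp
        qed
      qed
    next
      fix t show "Lf e Z Z' t \<le> Wf e A1 C1 t \<and> Wf e A1 C1 t \<le> Lf e Z Z' (Suc t) + 1"
        using G1 by (simp add: Good_def)
    next
      fix t show "Lf e Z Z' t \<le> Wf e A2 C2 t \<and> Wf e A2 C2 t \<le> Lf e Z Z' (Suc t) + 1"
        using G2 by (simp add: Good_def)
    next
      fix t show "Lf e Z Z' t \<le> Wf e A3 C3 t \<and> Wf e A3 C3 t \<le> Lf e Z Z' (Suc t) + 1"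
        using G3 by (simp add: Good_def)
    qed
  qed
  thus ?thesis using BI[OF MS NS] by (simp add: A_def C_def M_def N_def)
qed


lemma xs_empty: "xs A {} = A" by (auto simp: xs_def)
lemma xs_self: "xs A A = {}" by (auto simp: xs_def)
lemma xs_cancel: "xs A (xs A B) = B" by (auto simp: xs_def)
lemma xs_empty_left: "xs {} A = A" by (auto simp: xs_def)

lemma base_good:
  assumes fZ: "finite (fst Z)" "finite (snd Z)" and fZ': "finite (fst Z')" "finite (snd Z')"
    and hZ: "\<And>y. cnt (snd Z) y \<le> cnt (fst Z) y \<and> cnt (fst Z) y \<le> cnt (snd Z) y + 1"
    and hZ': "\<And>y. cnt (snd Z') y \<le> cnt (fst Z') y \<and> cnt (fst Z') y \<le> cnt (snd Z') y + 1"
    and G1: "Good e Z Z' A1 C1"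
  shows "Good e Z Z' (fst Z) (fst Z')"
proof -
  have c0: "\<And>y. int (cnt (fst Z) y) = (Fc Z y + 1) div 2"
  proof -
    fix y
    have "cnt (snd Z) y \<le> cnt (fst Z) y" "cnt (fst Z) y \<le> cnt (snd Z) y + 1" using hZ[of y] by auto
    thus "int (cnt (fst Z) y) = (Fc Z y + 1) div 2" unfolding Fc_def by presburger
  qed
  have c0': "\<And>y. int (cnt (fst Z') y) = (Fc Z' y + 1) div 2"
  proof -
    fix y
    have "cnt (snd Z') y \<le> cnt (fst Z') y" "cnt (fst Z') y \<le> cnt (snd Z') y + 1" using hZ'[of y] by auto
    thus "int (cnt (fst Z') y) = (Fc Z' y + 1) div 2" unfolding Fc_def by presburger
  qed
  have W0: "\<And>t. Wf e (fst Z) (fst Z') t = (Lf e Z Z' t + 1) div 2 + (Lf e Z Z' (Suc t) + 1) div 2"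
  proof -
    fix t
    show "Wf e (fst Z) (fst Z') t = (Lf e Z Z' t + 1) div 2 + (Lf e Z Z' (Suc t) + 1) div 2"
    proof (cases "even t")
      case True
      then obtain x where x: "t = 2 * x" by (rule evenE)
      show ?thesis unfolding x Wf_simps Lf_simps c0 c0' by (cases e) simp_all
    next
      case False
      then obtain x where x: "t = Suc (2 * x)" by (rule oddE) simp
      show ?thesis unfolding x Wf_simps Lf_simps c0 c0' by (cases e) simp_all
    qed
  qed
  show ?thesis unfolding Good_def
  proof
    fix t
    have "Lf e Z Z' t \<le> Lf e Z Z' (Suc t) + 1" using G1 unfolding Good_def by (meson order_trans)
    thus "Lf e Z Z' t \<le> Wf e (fst Z) (fst Z') t \<and> Wf e (fst Z) (fst Z') t \<le> Lf e Z Z' (Suc t) + 1"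
      unfolding W0 by presburger
  qed
qed

lemma special1_cnt:
  assumes "special1 Z"
  shows "finite (fst Z)" "finite (snd Z)" "card (fst Z) = card (snd Z) + 1"
    "\<And>y. cnt (snd Z) y \<le> cnt (fst Z) y \<and> cnt (fst Z) y \<le> cnt (snd Z) y + 1"
proof -
  show f: "finite (fst Z)" "finite (snd Z)" and c: "card (fst Z) = card (snd Z) + 1"
    using assms by (auto simp: special1_def)
  have h: "\<forall>i. 1 \<le> i \<and> i \<le> card (snd Z) \<longrightarrow> entry (snd Z) i \<le> entry (fst Z) i"
          "\<forall>i. 1 \<le> i \<and> i \<le> card (snd Z) \<longrightarrow> entry (fst Z) (i + 1) \<le> entry (snd Z) i"
    using assms by (auto simp: special1_def)
  fix y
  show "cnt (snd Z) y \<le> cnt (fst Z) y \<and> cnt (fst Z) y \<le> cnt (snd Z) y + 1"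
    using GLa[OF f(2,1)] GLe[OF f(2,1)] h c by simp
qed

lemma special0_cnt:
  assumes "special0 Z"
  shows "finite (fst Z)" "finite (snd Z)" "card (fst Z) = card (snd Z)"
    "\<And>y. cnt (snd Z) y \<le> cnt (fst Z) y \<and> cnt (fst Z) y \<le> cnt (snd Z) y + 1"
proof -
  show f: "finite (fst Z)" "finite (snd Z)" and c: "card (fst Z) = card (snd Z)"
    using assms by (auto simp: special0_def)
  have h1: "\<forall>i. 1 \<le> i \<and> i \<le> card (snd Z) \<longrightarrow> entry (snd Z) i \<le> entry (fst Z) i"
    using assms by (auto simp: special0_def)
  have h2: "\<forall>i. 1 \<le> i \<and> i \<le> card (snd Z) \<longrightarrow> entry (fst Z) (i + 1) \<le> entry (snd Z) i"
  proof (intro allI impI)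
    fix i assume i: "1 \<le> i \<and> i \<le> card (snd Z)"
    show "entry (fst Z) (i + 1) \<le> entry (snd Z) i"
    proof (cases "i < card (snd Z)")
      case True thus ?thesis using assms i by (auto simp: special0_def)
    next
      case False
      hence "entry (fst Z) (i + 1) = -\<infinity>" using c by (intro entry_out) simp
      thus ?thesis by simp
    qed
  qed
  fix y
  show "cnt (snd Z) y \<le> cnt (fst Z) y \<and> cnt (fst Z) y \<le> cnt (snd Z) y + 1"
    using GLa[OF f(2,1)] GLe[OF f(2,1)] h1 h2 c by simp
qed

theorem proposition0810:
  fixes Z Z' :: symbol
  assumes "special1 Z" and "special0 Z'"
    and "card (snd Z') = card (snd Z) \<or> card (snd Z') = card (snd Z) + 1"
    and "Dset Z Z' \<noteq> {}"
  shows "(\<forall>L L0'. L \<in> Sbar Z \<and> L0' \<in> Bplus_left Z Z' L \<longrightarrow>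
            Bplus_left Z Z' L = {sym_sum Z' L0' L' | L'. L' \<in> D_Z Z Z'})
       \<and> (\<forall>L' L0. L' \<in> Sbar Z' \<and> L0 \<in> Bplus_right Z Z' L' \<longrightarrow>
            Bplus_right Z Z' L' = {sym_sum Z L0 L | L. L \<in> D_Z' Z Z'})"
proof -
  note s1 = special1_cnt[OF assms(1)]
  note s0 = special0_cnt[OF assms(2)]
  note mm = assms(3)
  define m where "m = card (snd Z)"
  define m' where "m' = card (snd Z')"
  define e where "e = (card (snd Z') = card (snd Z))"
  define R where "R = (\<lambda>P Q. P \<subseteq> singles Z \<and> Q \<subseteq> singles Z' \<and> Bcond m m' (move Z P) (move Z' Q))"
  have cl: "\<And>P1 P2 P3 Q1 Q2 Q3. R P1 Q1 \<Longrightarrow> R P2 Q2 \<Longrightarrow> R P3 Q3 \<Longrightarrow> R (xs (xs P1 P2) P3) (xs (xs Q1 Q2) Q3)"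
    unfolding R_def m_def m'_def
    using closure3[OF s1(1,2) s0(1,2) s1(3) s0(3) mm] by (simp add: xs_sub)
  have BI: "\<And>P Q. P \<subseteq> singles Z \<Longrightarrow> Q \<subseteq> singles Z' \<Longrightarrow>
     Bcond m m' (move Z P) (move Z' Q) \<longleftrightarrow> Good e Z Z' (fst (move Z P)) (fst (move Z' Q))"
    unfolding e_def m_def m'_def
    by (rule Bcond_iff[OF s1(1,2) s0(1,2) s1(3) s0(3) mm]) (simp_all add: move_finite s1(1,2) s0(1,2) move_cnt_sum)
  have Bbar_iff: "\<And>X Y. (X, Y) \<in> Bbar Z Z' \<longleftrightarrow> (\<exists>P Q. X = move Z P \<and> Y = move Z' Q \<and> R P Q)"
    unfolding Bbar_def Sbar_iff R_def m_def m'_def by blast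
  have R00: "R {} {}"
  proof -
    obtain X Y where "(X, Y) \<in> Dset Z Z'" using assms(4) by auto
    hence "(X, Y) \<in> Bbar Z Z'" by (simp add: Dset_def)
    then obtain P Q where PQ: "X = move Z P" "Y = move Z' Q" "R P Q" using Bbar_iff by blast
    hence "Good e Z Z' (fst (move Z P)) (fst (move Z' Q))" using BI unfolding R_def by blast
    hence "Good e Z Z' (fst Z) (fst Z')" by (rule base_good[OF s1(1,2) s0(1,2) s1(4) s0(4)])
    hence "Good e Z Z' (fst (move Z {})) (fst (move Z' {}))" by (simp add: move_empty)
    thus ?thesis using BI[of "{}" "{}"] by (simp add: R_def)
  qed
  have defZ: "defect Z = 1" using s1(3) by (simp add: defect_def)
  have defZ': "defect Z' = 0" using s0(3) by (simp add: defect_def)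
  have ZS: "Z \<in> Sbar Z" using move_empty[of Z] by (auto simp: Sbar_iff)
  have ZS': "Z' \<in> Sbar Z'" using move_empty[of Z'] by (auto simp: Sbar_iff)
  have Rdef: "\<And>P Q. R P Q \<Longrightarrow> defect (move Z' Q) = 1 - defect (move Z P)"
    by (simp add: R_def Bcond_def)
  have DZ: "\<And>Y. Y \<in> D_Z Z Z' \<longleftrightarrow> (\<exists>Q. Y = move Z' Q \<and> R {} Q)"
  proof
    fix Y assume "Y \<in> D_Z Z Z'"
    hence "(Z, Y) \<in> Bbar Z Z'" by (simp add: D_Z_def Dset_def)
    then obtain P Q where PQ: "Z = move Z P" "Y = move Z' Q" "R P Q" using Bbar_iff by blast
    have "P = moved_set Z (move Z P)" using PQ(3) by (simp add: R_def moved_set_move)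
    also have "\<dots> = moved_set Z (move Z {})" using PQ(1) move_empty[of Z] by simp
    also have "\<dots> = {}" by (simp add: moved_set_move)
    finally show "\<exists>Q. Y = move Z' Q \<and> R {} Q" using PQ by blast
  next
    fix Y assume "\<exists>Q. Y = move Z' Q \<and> R {} Q"
    then obtain Q where Q: "Y = move Z' Q" "R {} Q" by blast
    have "(Z, Y) \<in> Bbar Z Z'" using Bbar_iff Q move_empty[of Z] by metis
    moreover have "Z \<in> Sdef Z 1" using ZS defZ by (simp add: Sdef_def)
    moreover have "Y \<in> Sdef Z' 0" using Q Rdef[OF Q(2)] defZ move_empty[of Z]
      by (auto simp: Sdef_def Sbar_iff R_def)
    ultimately show "Y \<in> D_Z Z Z'" by (simp add: D_Z_def Dset_def)
  qed
  have DZ': "\<And>X. X \<in> D_Z' Z Z' \<longleftrightarrow> (\<exists>P. X = move Z P \<and> R P {})"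
  proof
    fix X assume "X \<in> D_Z' Z Z'"
    hence "(X, Z') \<in> Bbar Z Z'" by (simp add: D_Z'_def Dset_def)
    then obtain P Q where PQ: "X = move Z P" "Z' = move Z' Q" "R P Q" using Bbar_iff by blast
    have "Q = moved_set Z' (move Z' Q)" using PQ(3) by (simp add: R_def moved_set_move)
    also have "\<dots> = moved_set Z' (move Z' {})" using PQ(2) move_empty[of Z'] by simp
    also have "\<dots> = {}" by (simp add: moved_set_move)
    finally show "\<exists>P. X = move Z P \<and> R P {}" using PQ by blast
  next
    fix X assume "\<exists>P. X = move Z P \<and> R P {}"
    then obtain P where P: "X = move Z P" "R P {}" by blast
    have "(X, Z') \<in> Bbar Z Z'" using Bbar_iff P move_empty[of Z'] by metis
    moreover have "Z' \<in> Sdef Z' 0" using ZS' defZ' by (simp add: Sdef_def)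
    moreover have "X \<in> Sdef Z 1" using P Rdef[OF P(2)] defZ' move_empty[of Z']
      by (auto simp: Sdef_def Sbar_iff R_def)
    ultimately show "X \<in> D_Z' Z Z'" by (simp add: D_Z'_def Dset_def)
  qed
  have Rsub: "\<And>P Q. R P Q \<Longrightarrow> P \<subseteq> singles Z \<and> Q \<subseteq> singles Z'" by (simp add: R_def)
  have part1: "\<forall>L L0'. L \<in> Sbar Z \<and> L0' \<in> Bplus_left Z Z' L \<longrightarrow>
            Bplus_left Z Z' L = {sym_sum Z' L0' L' | L'. L' \<in> D_Z Z Z'}"
  proof (intro allI impI)
    fix L L0' assume h: "L \<in> Sbar Z \<and> L0' \<in> Bplus_left Z Z' L"
    then obtain P0 Q0 where PQ0: "L = move Z P0" "L0' = move Z' Q0" "R P0 Q0"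
      using Bbar_iff by (auto simp: Bplus_left_def)
    have Lmove: "\<And>P. R P Q0 \<Longrightarrow> move Z P = L \<Longrightarrow> P = P0"
      using PQ0 Rsub by (metis moved_set_move)
    show "Bplus_left Z Z' L = {sym_sum Z' L0' L' | L'. L' \<in> D_Z Z Z'}"
    proof (intro set_eqI iffI)
      fix X assume "X \<in> Bplus_left Z Z' L"
      then obtain P Q where PQ: "L = move Z P" "X = move Z' Q" "R P Q"
        using Bbar_iff by (auto simp: Bplus_left_def)
      have "P = P0" using PQ PQ0 Rsub by (metis moved_set_move)
      have "R (xs (xs P0 P) {}) (xs (xs Q0 Q) {})" using cl[OF PQ0(3) PQ(3) R00] .
      hence r: "R {} (xs Q0 Q)" using \<open>P = P0\<close> by (simp add: xs_empty xs_self)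
      have "move Z' (xs Q0 Q) \<in> D_Z Z Z'" using DZ r by blast
      moreover have "X = sym_sum Z' L0' (move Z' (xs Q0 Q))"
        using PQ0 PQ Rsub[OF PQ0(3)] Rsub[OF PQ(3)] Rsub[OF r]
        by (simp add: sym_sum_move xs_cancel)
      ultimately show "X \<in> {sym_sum Z' L0' L' | L'. L' \<in> D_Z Z Z'}" by blast
    next
      fix X assume "X \<in> {sym_sum Z' L0' L' | L'. L' \<in> D_Z Z Z'}"
      then obtain Y where Y: "X = sym_sum Z' L0' Y" "Y \<in> D_Z Z Z'" by blast
      then obtain Q where Q: "Y = move Z' Q" "R {} Q" using DZ by blast
      have "R (xs (xs P0 {}) {}) (xs (xs Q0 Q) {})" using cl[OF PQ0(3) Q(2) R00] .
      hence r: "R P0 (xs Q0 Q)" by (simp add: xs_empty)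
      have "X = move Z' (xs Q0 Q)" using Y Q PQ0 Rsub[OF PQ0(3)] Rsub[OF Q(2)] by (simp add: sym_sum_move)
      thus "X \<in> Bplus_left Z Z' L" using Bbar_iff r PQ0 by (auto simp: Bplus_left_def)
    qed
  qed
  have part2: "\<forall>L' L0. L' \<in> Sbar Z' \<and> L0 \<in> Bplus_right Z Z' L' \<longrightarrow>
            Bplus_right Z Z' L' = {sym_sum Z L0 L | L. L \<in> D_Z' Z Z'}"
  proof (intro allI impI)
    fix L' L0 assume h: "L' \<in> Sbar Z' \<and> L0 \<in> Bplus_right Z Z' L'"
    then obtain P0 Q0 where PQ0: "L0 = move Z P0" "L' = move Z' Q0" "R P0 Q0"
      using Bbar_iff by (auto simp: Bplus_right_def)
    show "Bplus_right Z Z' L' = {sym_sum Z L0 L | L. L \<in> D_Z' Z Z'}"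
    proof (intro set_eqI iffI)
      fix X assume "X \<in> Bplus_right Z Z' L'"
      then obtain P Q where PQ: "X = move Z P" "L' = move Z' Q" "R P Q"
        using Bbar_iff by (auto simp: Bplus_right_def)
      have "Q = Q0" using PQ PQ0 Rsub by (metis moved_set_move)
      have "R (xs (xs P0 P) {}) (xs (xs Q0 Q) {})" using cl[OF PQ0(3) PQ(3) R00] .
      hence r: "R (xs P0 P) {}" using \<open>Q = Q0\<close> by (simp add: xs_empty xs_self)
      have "move Z (xs P0 P) \<in> D_Z' Z Z'" using DZ' r by blast
      moreover have "X = sym_sum Z L0 (move Z (xs P0 P))"
        using PQ0 PQ Rsub[OF PQ0(3)] Rsub[OF PQ(3)] Rsub[OF r]
        by (simp add: sym_sum_move xs_cancel)
      ultimately show "X \<in> {sym_sum Z L0 L | L. L \<in> D_Z' Z Z'}" by blast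
    next
      fix X assume "X \<in> {sym_sum Z L0 L | L. L \<in> D_Z' Z Z'}"
      then obtain Y where Y: "X = sym_sum Z L0 Y" "Y \<in> D_Z' Z Z'" by blast
      then obtain P where P: "Y = move Z P" "R P {}" using DZ' by blast
      have "R (xs (xs P0 P) {}) (xs (xs Q0 {}) {})" using cl[OF PQ0(3) P(2) R00] .
      hence r: "R (xs P0 P) Q0" by (simp add: xs_empty)
      have "X = move Z (xs P0 P)" using Y P PQ0 Rsub[OF PQ0(3)] Rsub[OF P(2)] by (simp add: sym_sum_move)
      thus "X \<in> Bplus_right Z Z' L'" using Bbar_iff r PQ0 by (auto simp: Bplus_right_def)
    qed
  qed
  show ?thesis using part1 part2 by blast
qed


end
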